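(* Let $P$ be a probability distribution on $\mathsf{X}_N$ that has a density $p$ with respect to $\mu$. (a) Let $G=(N,E)$ be a DAG with topological ordering $\mathcal{O}$, let $A\subseteq\mathrm{roots}(G)$, and let $H=(N,E\cup E_A)$ with $E_A=\{(s,t):s,t\in A,\ \mathcal{O}(s)<\mathcal{O}(t)\}$. If there exists a Markov kernel $K\in\mathcal{K}^G$ that is a version of the conditional distribution $P_{N\setminus A\mid A}$, then $P\in\mathcal{P}^H$. (b) Let $G=(N,E)$ be a DAG, let $A\subseteq N$ be such that all parents in $G$ of nodes in $A$ are themselves in $A$, and let $H=(N,E\setminus E_A)$ with $E_A=\{(s,t)\in E: s,t\in A\}$. If $P\in\mathcal{P}^G$, then there exists a Markov kernel $K\in\mathcal{K}^H$ that is a version of the conditional distribution $P_{N\setminus A\mid A}$.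
   Context: DAG: finite directed graph without directed cycles; $\mathrm{pa}_G(s)$ are the parents of $s$; $\mathrm{roots}(G)=\{s:\mathrm{pa}_G(s)=\emptyset\}$. A topological ordering is a bijection $\mathcal{O}:N\to\{1,\dots,|N|\}$ with $(s,t)\in E\Rightarrow\mathcal{O}(s)<\mathcal{O}(t)$. Each node $s$ has a state space $\mathsf{X}_s$ (finite set with counting measure, or finite-dimensional real vector space with Lebesgue measure $\mu_s$), $\mathsf{X}_A=\times_{s\in A}\mathsf{X}_s$, $\mu=\otimes_s\mu_s$. A kernel function for $s$ in $G$ is a measurable $k^s:\mathsf{X}_s\times\mathsf{X}_{\mathrm{pa}_G(s)}\to\mathbb{R}_{\ge0}$ integrating to $1$ in $x_s$ w.r.t. $\mu_s$. $\mathcal{P}^G$ = set of probability distributions on $\mathsf{X}_N$ with a $\mu$-density $p(x)=\prod_{s\in N}k^s(x_s\mid x_{\mathrm{pa}_G(s)})$. For $A\subseteq N$ such that all parents in $G$ of nodes of $A$ lie in $A$, $\mathcal{K}^G$ is the set of Markov kernels $K$ from $\mathsf{X}_A$ to $\mathsf{X}_{N\setminus A}$ for which there are kernel functions $(k^s)_{s\in N\setminus A}$ such that for every $x_A$, $K(\cdot,x_A)$ has density $\prod_{s\in N\setminus A}k^s(x_s\mid x_{\mathrm{pa}_G(s)})$. A Markov kernel $K$ is a version of $P_{N\setminus A\mid A}$ if $P(\mathsf{B}\times\mathsf{C})=\int_{\mathsf{C}}K(\mathsf{B},x_A)\,dP_A(x_A)$ for all measurable $\mathsf{B}\subseteq\mathsf{X}_{N\setminus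 A}$, $\mathsf{C}\subseteq\mathsf{X}_A$, where $P_A$ is the marginal of $P$ on $\mathsf{X}_A$. *)

theory Defs
  imports "HOL-Probability.Probability"
begin

text \<open>State spaces: a finite set with counting measure, or (an injective copy of)
  R^d with Lebesgue (Borel) measure, realised as the product of d copies of lborel.\<close>
definition state_space :: "'x measure \<Rightarrow> bool" where
  "state_space Ms \<longleftrightarrow>
     (\<exists>F. finite F \<and> Ms = count_space F) \<or>
     (\<exists>(d::nat) (f::(nat \<Rightarrow> real) \<Rightarrow> 'x).
        inj_on f (space (Pi\<^sub>M {..<d} (\<lambda>_. lborel))) \<and>
        Ms = embed_measure (Pi\<^sub>M {..<d} (\<lambda>_. lborel)) f)"

definition is_dag :: "'n set \<Rightarrow> ('n \<times> 'n) set \<Rightarrow> bool" where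
  "is_dag N E \<longleftrightarrow> finite N \<and> E \<subseteq> N \<times> N \<and> acyclic E"

definition pa :: "('n \<times> 'n) set \<Rightarrow> 'n \<Rightarrow> 'n set" where
  "pa E s = {t. (t, s) \<in> E}"

definition roots :: "'n set \<Rightarrow> ('n \<times> 'n) set \<Rightarrow> 'n set" where
  "roots N E = {s \<in> N. pa E s = {}}"

definition topo_order :: "'n set \<Rightarrow> ('n \<times> 'n) set \<Rightarrow> ('n \<Rightarrow> nat) \<Rightarrow> bool" where
  "topo_order N E ord \<longleftrightarrow> bij_betw ord N {1..card N} \<and> (\<forall>s t. (s, t) \<in> E \<longrightarrow> ord s < ord t)"

text \<open>Kernel function for node s in G=(N,E): k v y = k^s(v | y_{pa(s)}).\<close>
definition kernel_fun :: "('n \<Rightarrow> 'x measure) \<Rightarrow> ('n \<times> 'n) set \<Rightarrow> 'n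
    \<Rightarrow> ('x \<Rightarrow> ('n \<Rightarrow> 'x) \<Rightarrow> real) \<Rightarrow> bool" where
  "kernel_fun M E s k \<longleftrightarrow>
     (\<lambda>(v, y). k v y) \<in> borel_measurable (M s \<Otimes>\<^sub>M Pi\<^sub>M (pa E s) M) \<and>
     (\<forall>v \<in> space (M s). \<forall>y \<in> space (Pi\<^sub>M (pa E s) M). 0 \<le> k v y) \<and>
     (\<forall>y \<in> space (Pi\<^sub>M (pa E s) M). (\<integral>\<^sup>+ v. ennreal (k v y) \<partial>M s) = 1)"

definition in_PG :: "('n \<Rightarrow> 'x measure) \<Rightarrow> 'n set \<Rightarrow> ('n \<times> 'n) set
    \<Rightarrow> ('n \<Rightarrow> 'x) measure \<Rightarrow> bool" where
  "in_PG M N E P \<longleftrightarrow> prob_space P \<and>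
     (\<exists>k. (\<forall>s\<in>N. kernel_fun M E s (k s)) \<and>
          P = density (Pi\<^sub>M N M)
                (\<lambda>x. \<Prod>s\<in>N. ennreal (k s (x s) (restrict x (pa E s)))))"

definition in_KG :: "('n \<Rightarrow> 'x measure) \<Rightarrow> 'n set \<Rightarrow> ('n \<times> 'n) set \<Rightarrow> 'n set
    \<Rightarrow> (('n \<Rightarrow> 'x) \<Rightarrow> ('n \<Rightarrow> 'x) measure) \<Rightarrow> bool" where
  "in_KG M N E A K \<longleftrightarrow>
     K \<in> measurable (Pi\<^sub>M A M) (prob_algebra (Pi\<^sub>M (N - A) M)) \<and>
     (\<exists>k. (\<forall>s\<in>N - A. kernel_fun M E s (k s)) \<and>
          (\<forall>xa \<in> space (Pi\<^sub>M A M).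
             K xa = density (Pi\<^sub>M (N - A) M)
                (\<lambda>y. \<Prod>s\<in>N - A. ennreal (k s (y s)
                        (restrict (merge A (N - A) (xa, y)) (pa E s))))))"

definition cond_version :: "('n \<Rightarrow> 'x measure) \<Rightarrow> 'n set \<Rightarrow> 'n set
    \<Rightarrow> ('n \<Rightarrow> 'x) measure \<Rightarrow> (('n \<Rightarrow> 'x) \<Rightarrow> ('n \<Rightarrow> 'x) measure) \<Rightarrow> bool" where
  "cond_version M N A P K \<longleftrightarrow>
     K \<in> measurable (Pi\<^sub>M A M) (prob_algebra (Pi\<^sub>M (N - A) M)) \<and>
     (\<forall>B \<in> sets (Pi\<^sub>M (N - A) M). \<forall>C \<in> sets (Pi\<^sub>M A M).
        emeasure P {x \<in> space (Pi\<^sub>M N M). restrict x (N - A) \<in> B \<and> restrict x A \<in> C}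
        = (\<integral>\<^sup>+ xa. emeasure (K xa) B * indicator C xa
             \<partial>(distr P (Pi\<^sub>M A M) (\<lambda>x. restrict x A))))"

end

theory Submission
  imports Defs
begin


definition kf :: "('n \<Rightarrow> 'x measure) \<Rightarrow> 'n set \<Rightarrow> 'n
    \<Rightarrow> ('x \<Rightarrow> ('n \<Rightarrow> 'x) \<Rightarrow> real) \<Rightarrow> bool" where
  "kf M S s k \<longleftrightarrow>
     (\<lambda>(v, y). k v y) \<in> borel_measurable (M s \<Otimes>\<^sub>M Pi\<^sub>M S M) \<and>
     (\<forall>v \<in> space (M s). \<forall>y \<in> space (Pi\<^sub>M S M). 0 \<le> k v y) \<and>
     (\<forall>y \<in> space (Pi\<^sub>M S M). (\<integral>\<^sup>+ v. ennreal (k v y) \<partial>M s) = 1)"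

lemma kernel_fun_kf: "kernel_fun M E s k \<longleftrightarrow> kf M (pa E s) s k"
  unfolding kernel_fun_def kf_def ..

lemma kf_meas:
  assumes "kf M S s k" "f \<in> L \<rightarrow>\<^sub>M Pi\<^sub>M I M" "S \<subseteq> I" "s \<in> I"
  shows "(\<lambda>z. k (f z s) (restrict (f z) S)) \<in> borel_measurable L"
proof -
  have a: "(\<lambda>z. f z s) \<in> L \<rightarrow>\<^sub>M M s"
    using measurable_compose[OF assms(2) measurable_component_singleton[OF assms(4)]] .
  have b: "(\<lambda>z. restrict (f z) S) \<in> L \<rightarrow>\<^sub>M Pi\<^sub>M S M"
    using measurable_compose[OF assms(2) measurable_restrict_subset[OF assms(3)]] .
  have 1: "(\<lambda>z. (f z s, restrict (f z) S)) \<in> L \<rightarrow>\<^sub>M (M s \<Otimes>\<^sub>M Pi\<^sub>M S M)"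
    using a b by (rule measurable_Pair)
  have "(\<lambda>z. (\<lambda>(v, y). k v y) (f z s, restrict (f z) S)) \<in> borel_measurable L"
    using measurable_comp[OF 1 conjunct1[OF assms(1)[unfolded kf_def]]] by (simp add: comp_def)
  then show ?thesis by simp
qed

lemma kf_meas1:
  assumes "kf M S s k" "y \<in> space (Pi\<^sub>M S M)"
  shows "(\<lambda>v. k v y) \<in> borel_measurable (M s)"
proof -
  have 1: "(\<lambda>v. (v, y)) \<in> M s \<rightarrow>\<^sub>M (M s \<Otimes>\<^sub>M Pi\<^sub>M S M)"
    using assms(2) by (intro measurable_Pair) auto
  show ?thesis
    using measurable_comp[OF 1 conjunct1[OF assms(1)[unfolded kf_def]]] by (simp add: comp_def)
qed

lemma sigma_finite_embed_measure':
  assumes "sigma_finite_measure M" and inj: "inj_on f (space M)"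
  shows "sigma_finite_measure (embed_measure M f)"
proof -
  from assms(1) interpret sigma_finite_measure M .
  from sigma_finite_countable obtain A where
      A_props: "countable A" "A \<subseteq> sets M" "\<Union>A = space M" "\<And>X. X\<in>A \<Longrightarrow> emeasure M X \<noteq> \<infinity>" by blast
  from A_props have "countable ((`) f`A)" by auto
  moreover
  from inj and A_props have "(`) f`A \<subseteq> sets (embed_measure M f)"
    by (auto simp: sets_embed_measure')
  moreover
  from A_props and inj have "\<Union>((`) f`A) = space (embed_measure M f)"
    by (auto simp: space_embed_measure intro!: imageI)
  moreover
  have "\<forall>a\<in>(`) f ` A. emeasure (embed_measure M f) a \<noteq> \<infinity>"
  proof
    fix a assume "a \<in> (`) f ` A"
    then obtain X where X: "X \<in> A" "a = f ` X" by auto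
    have XS: "X \<subseteq> space M" using X A_props by auto
    have "f -` f ` X \<inter> space M = X" using XS inj by (auto dest: inj_onD)
    then show "emeasure (embed_measure M f) a \<noteq> \<infinity>"
      using X A_props inj by (subst emeasure_embed_measure') (auto intro: in_sets_embed_measure)
  qed
  ultimately show ?thesis by - (standard, blast)
qed

lemma state_space_sf: "state_space Ms \<Longrightarrow> sigma_finite_measure Ms"
  unfolding state_space_def
proof (elim disjE exE conjE)
  fix F :: "'a set" assume "finite F" "Ms = count_space F"
  then show ?thesis
    by (simp add: finite_measure.sigma_finite_measure finite_measure_count_space)
next
  fix d :: nat and f :: "(nat \<Rightarrow> real) \<Rightarrow> 'a"
  assume a: "inj_on f (space (Pi\<^sub>M {..<d} (\<lambda>_. lborel)))" "Ms = embed_measure (Pi\<^sub>M {..<d} (\<lambda>_. lborel)) f"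
  interpret product_sigma_finite "\<lambda>_::nat. lborel :: real measure"
    by standard
  have "sigma_finite_measure (Pi\<^sub>M {..<d} (\<lambda>_. lborel :: real measure))"
    by (rule sigma_finite) simp
  then show ?thesis using a sigma_finite_embed_measure' by metis
qed

lemma kf_meas_prod:
  assumes "\<And>s. s \<in> D \<Longrightarrow> kf M (P s) s (k s)" "f \<in> L \<rightarrow>\<^sub>M Pi\<^sub>M I M"
    "\<And>s. s \<in> D \<Longrightarrow> P s \<subseteq> I" "D \<subseteq> I"
  shows "(\<lambda>z. \<Prod>s\<in>D. ennreal (k s (f z s) (restrict (f z) (P s)))) \<in> borel_measurable L"
proof (rule borel_measurable_prod_ennreal)
  fix s assume s: "s \<in> D"
  have "(\<lambda>z. k s (f z s) (restrict (f z) (P s))) \<in> borel_measurable L"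
    using kf_meas[OF assms(1)[OF s] assms(2) assms(3)[OF s]] s assms(4) by blast
  then show "(\<lambda>z. ennreal (k s (f z s) (restrict (f z) (P s)))) \<in> borel_measurable L"
    using measurable_compose[OF _ measurable_ennreal] by blast
qed

lemma sink_exists:
  assumes "finite D" "D \<noteq> {}" "acyclic E"
  shows "\<exists>t\<in>D. \<forall>s\<in>D. (t, s) \<notin> E"
proof -
  let ?R = "E \<inter> D \<times> D"
  have fin: "finite ?R"
    by (rule finite_subset[OF _ finite_cartesian_product[OF assms(1) assms(1)]]) (rule Int_lower2)
  have ac: "acyclic ?R" by (rule acyclic_subset[OF assms(3)]) (rule Int_lower1)
  have wf: "wf (?R\<inverse>)" using finite_acyclic_wf_converse[OF fin ac] .
  obtain x where x: "x \<in> D" using assms(2) by auto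
  obtain z where z: "z \<in> D" and zmin: "\<And>y. (y, z) \<in> ?R\<inverse> \<Longrightarrow> y \<notin> D"
    using wf[unfolded wf_eq_minimal, rule_format, OF x] by blast
  show ?thesis
  proof (intro bexI[of _ z] ballI)
    fix s assume s: "s \<in> D"
    show "(z, s) \<notin> E"
    proof
      assume "(z, s) \<in> E"
      then have "(s, z) \<in> ?R\<inverse>" using s z by simp
      then show False using zmin s by blast
    qed
  qed (rule z)
qed

lemma merge_pair_meas:
  assumes "z \<in> space (Pi\<^sub>M C M)"
  shows "(\<lambda>y. merge C D (z, y)) \<in> Pi\<^sub>M D M \<rightarrow>\<^sub>M Pi\<^sub>M (C \<union> D) M"
proof -
  have "(\<lambda>y. (z, y)) \<in> Pi\<^sub>M D M \<rightarrow>\<^sub>M (Pi\<^sub>M C M \<Otimes>\<^sub>M Pi\<^sub>M D M)"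
    using assms by (intro measurable_Pair measurable_const measurable_ident_sets) auto
  from measurable_compose[OF this measurable_merge] show ?thesis .
qed



context product_sigma_finite
begin

lemma int_one:
  assumes "finite D" "acyclic E" "C \<inter> D = {}" "\<forall>s\<in>D. kf M (pa E s) s (k s)"
    "\<forall>s\<in>D. pa E s \<subseteq> C \<union> D" "z \<in> space (Pi\<^sub>M C M)"
  shows "(\<integral>\<^sup>+ y. (\<Prod>s\<in>D. ennreal (k s (y s) (restrict (merge C D (z, y)) (pa E s)))) \<partial>Pi\<^sub>M D M) = 1"
  using assms
proof (induction D rule: finite_psubset_induct)
  case (psubset D)
  show ?case
  proof (cases "D = {}")
    case True
    then show ?thesis by (simp add: PiM_empty)
  next
    case False
    obtain t where t: "t \<in> D" "\<forall>s\<in>D. (t, s) \<notin> E"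
      using sink_exists[OF psubset.hyps(1) False psubset.prems(1)] by blast
    define D' where "D' = D - {t}"
    have D: "D = insert t D'" "t \<notin> D'" "finite D'" using t psubset.hyps(1) by (auto simp: D'_def)
    have tpa: "\<And>s. s \<in> D \<Longrightarrow> t \<notin> pa E s" using t by (auto simp: pa_def)
    have pa': "\<forall>s\<in>D'. pa E s \<subseteq> C \<union> D'" using psubset.prems(4) tpa by (auto simp: D'_def)
    have sub: "D' \<subset> D" using t by (auto simp: D'_def)
    have IH: "(\<integral>\<^sup>+ y. (\<Prod>s\<in>D'. ennreal (k s (y s) (restrict (merge C D' (z, y)) (pa E s)))) \<partial>Pi\<^sub>M D' M) = 1"
    proof (rule psubset.IH[OF sub psubset.prems(1)])
      show "C \<inter> D' = {}" using psubset.prems(2) sub by blast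
      show "\<forall>s\<in>D'. kf M (pa E s) s (k s)" using psubset.prems(3) sub by blast
    qed (use pa' psubset.prems(5) in blast)+
    have patC: "pa E t \<subseteq> C \<union> D'" using pa' psubset.prems(4) t tpa D by auto
    define f where "f = (\<lambda>y. \<Prod>s\<in>D. ennreal (k s (y s) (restrict (merge C D (z, y)) (pa E s))))"
    have fm: "f \<in> borel_measurable (Pi\<^sub>M D M)"
    proof -
      have "(\<lambda>y. \<Prod>s\<in>D. ennreal (k s (merge C D (z, y) s) (restrict (merge C D (z, y)) (pa E s))))
              \<in> borel_measurable (Pi\<^sub>M D M)"
        by (rule kf_meas_prod[OF _ merge_pair_meas[OF psubset.prems(5)]]) (use psubset.prems(3,4) in blast)+
      moreover have "\<And>y. (\<Prod>s\<in>D. ennreal (k s (merge C D (z, y) s) (restrict (merge C D (z, y)) (pa E s))))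
          = f y" unfolding f_def using psubset.prems(2) by (intro prod.cong) auto
      ultimately show ?thesis by simp
    qed
    have "(\<integral>\<^sup>+ y. f y \<partial>Pi\<^sub>M D M) = (\<integral>\<^sup>+ x. (\<integral>\<^sup>+ v. f (x(t := v)) \<partial>M t) \<partial>Pi\<^sub>M D' M)"
      using product_nn_integral_insert[of D' t f] fm D by simp
    also have "\<dots> = (\<integral>\<^sup>+ x. (\<Prod>s\<in>D'. ennreal (k s (x s) (restrict (merge C D' (z, x)) (pa E s)))) \<partial>Pi\<^sub>M D' M)"
    proof (rule nn_integral_cong)
      fix x assume x: "x \<in> space (Pi\<^sub>M D' M)"
      let ?y = "restrict (merge C D' (z, x)) (pa E t)"
      have r: "restrict (merge C D (z, x(t := v))) (pa E s) = restrict (merge C D' (z, x)) (pa E s)"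
        if s: "s \<in> D" for s v
        unfolding restrict_def merge_def D'_def using tpa[OF s] by (intro ext) auto
      have yS: "?y \<in> space (Pi\<^sub>M (pa E t) M)"
      proof -
        have "merge C D' (z, x) \<in> space (Pi\<^sub>M (C \<union> D') M)"
          using measurable_space[OF merge_pair_meas[OF psubset.prems(5)] x] .
        from measurable_space[OF measurable_restrict_subset[OF patC] this] show ?thesis .
      qed
      have kt: "kf M (pa E t) t (k t)" using psubset.prems(3) t(1) by blast
      have fx: "f (x(t := v)) = ennreal (k t v ?y) * (\<Prod>s\<in>D'. ennreal (k s (x s) (restrict (merge C D' (z, x)) (pa E s))))" for v
      proof -
        have "f (x(t := v)) = ennreal (k t ((x(t:=v)) t) (restrict (merge C D (z, x(t := v))) (pa E t))) * (\<Prod>s\<in>D'. ennreal (k s ((x(t:=v)) s) (restrict (merge C D (z, x(t := v))) (pa E s))))"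
          unfolding f_def using prod.insert[OF D(3) D(2), of "\<lambda>s. ennreal (k s ((x(t:=v)) s) (restrict (merge C D (z, x(t := v))) (pa E s)))"] D(1) by simp
        also have "(\<Prod>s\<in>D'. ennreal (k s ((x(t:=v)) s) (restrict (merge C D (z, x(t := v))) (pa E s)))) = (\<Prod>s\<in>D'. ennreal (k s (x s) (restrict (merge C D' (z, x)) (pa E s))))"
        proof (rule prod.cong[OF refl])
          fix s assume s: "s \<in> D'"
          then have "s \<in> D" "s \<noteq> t" using D by auto
          then show "ennreal (k s ((x(t:=v)) s) (restrict (merge C D (z, x(t := v))) (pa E s))) = ennreal (k s (x s) (restrict (merge C D' (z, x)) (pa E s)))"
            using r[of s v] by simp
        qed
        also have "ennreal (k t ((x(t:=v)) t) (restrict (merge C D (z, x(t := v))) (pa E t))) = ennreal (k t v ?y)"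
          using r[OF t(1), of v] by simp
        finally show ?thesis .
      qed
      have e1: "(\<integral>\<^sup>+ v. f (x(t := v)) \<partial>M t) = (\<integral>\<^sup>+ v. ennreal (k t v ?y) \<partial>M t) * (\<Prod>s\<in>D'. ennreal (k s (x s) (restrict (merge C D' (z, x)) (pa E s))))"
        unfolding fx by (rule nn_integral_multc) (use kf_meas1[OF kt yS] measurable_compose[OF _ measurable_ennreal] in blast)
      have e2: "(\<integral>\<^sup>+ v. ennreal (k t v ?y) \<partial>M t) = 1"
        using kt yS unfolding kf_def by blast
      show "(\<integral>\<^sup>+ v. f (x(t := v)) \<partial>M t) = (\<Prod>s\<in>D'. ennreal (k s (x s) (restrict (merge C D' (z, x)) (pa E s))))"
        unfolding e1 e2 by (rule mult_1_left)
    qed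
    also have "\<dots> = 1" by (rule IH)
    finally show ?thesis unfolding f_def .
  qed
qed

end


context product_sigma_finite
begin

lemma restrict_upd_eq:
  assumes "y \<in> space (Pi\<^sub>M I M)" "t \<notin> I"
  shows "restrict (y(t := v)) I = y"
  using assms by (auto simp: space_PiM PiE_def extensional_def restrict_def fun_eq_iff)

lemma upd_restrict_eq:
  assumes "x \<in> space (Pi\<^sub>M (insert t I) M)" "t \<notin> I"
  shows "(restrict x I)(t := x t) = x"
  using assms by (auto simp: space_PiM PiE_def extensional_def restrict_def fun_eq_iff)

lemma add_dim_meas:
  assumes "q \<in> borel_measurable (Pi\<^sub>M (insert t I) M)"
  shows "(\<lambda>(y, v). q (y(t := v))) \<in> borel_measurable (Pi\<^sub>M I M \<Otimes>\<^sub>M M t)"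
proof -
  have "(\<lambda>x. q ((\<lambda>(f, y). f(t := y)) x)) \<in> borel_measurable (Pi\<^sub>M I M \<Otimes>\<^sub>M M t)"
    using measurable_compose[OF measurable_add_dim assms] .
  moreover have "(\<lambda>x. q ((\<lambda>(f, y). f(t := y)) x)) = (\<lambda>(y, v). q (y(t := v)))"
    by (simp add: fun_eq_iff split_beta)
  ultimately show ?thesis by simp
qed

lemma add_dim_meas_swap:
  assumes "q \<in> borel_measurable (Pi\<^sub>M (insert t I) M)"
  shows "(\<lambda>(v, y). q (y(t := v))) \<in> borel_measurable (M t \<Otimes>\<^sub>M Pi\<^sub>M I M)"
proof -
  have sw: "(\<lambda>p. (snd p, fst p)) \<in> (M t \<Otimes>\<^sub>M Pi\<^sub>M I M) \<rightarrow>\<^sub>M (Pi\<^sub>M I M \<Otimes>\<^sub>M M t)"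
    by (intro measurable_Pair measurable_snd measurable_fst)
  have "(\<lambda>p. (\<lambda>(y, v). q (y(t := v))) (snd p, fst p)) \<in> borel_measurable (M t \<Otimes>\<^sub>M Pi\<^sub>M I M)"
    using measurable_compose[OF sw add_dim_meas[OF assms]] .
  moreover have "(\<lambda>p. (\<lambda>(y, v). q (y(t := v))) (snd p, fst p)) = (\<lambda>(v, y). q (y(t := v)))"
    by (simp add: fun_eq_iff split_beta)
  ultimately show ?thesis by simp
qed

lemma AE_restrict_insert:
  assumes "finite I" "t \<notin> I" "AE y in Pi\<^sub>M I M. R y"
  shows "AE x in Pi\<^sub>M (insert t I) M. R (restrict x I)"
proof -
  from assms(3) obtain N0 where N0: "{y\<in>space (Pi\<^sub>M I M). \<not> R y} \<subseteq> N0" "emeasure (Pi\<^sub>M I M) N0 = 0" "N0 \<in> sets (Pi\<^sub>M I M)"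
    by (rule AE_E)
  have rm: "(\<lambda>x. restrict x I) \<in> Pi\<^sub>M (insert t I) M \<rightarrow>\<^sub>M Pi\<^sub>M I M"
    by (rule measurable_restrict_subset) blast
  let ?S = "(\<lambda>x. restrict x I) -` N0 \<inter> space (Pi\<^sub>M (insert t I) M)"
  have S: "?S \<in> sets (Pi\<^sub>M (insert t I) M)" using measurable_sets[OF rm N0(3)] .
  have im: "(\<lambda>x. indicator N0 (restrict x I) :: ennreal) \<in> borel_measurable (Pi\<^sub>M (insert t I) M)"
    using measurable_compose[OF rm borel_measurable_indicator[OF N0(3)]] .
  have "emeasure (Pi\<^sub>M (insert t I) M) ?S = (\<integral>\<^sup>+ x. indicator ?S x \<partial>Pi\<^sub>M (insert t I) M)"
    using S by simp
  also have "\<dots> = (\<integral>\<^sup>+ x. indicator N0 (restrict x I) \<partial>Pi\<^sub>M (insert t I) M)"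
    by (rule nn_integral_cong) (simp add: indicator_def)
  also have "\<dots> = (\<integral>\<^sup>+ y. (\<integral>\<^sup>+ v. indicator N0 (restrict (y(t := v)) I) \<partial>M t) \<partial>Pi\<^sub>M I M)"
    by (rule product_nn_integral_insert[OF assms(1,2) im])
  also have "\<dots> = (\<integral>\<^sup>+ y. indicator N0 y * emeasure (M t) (space (M t)) \<partial>Pi\<^sub>M I M)"
  proof (rule nn_integral_cong)
    fix y assume y: "y \<in> space (Pi\<^sub>M I M)"
    show "(\<integral>\<^sup>+ v. indicator N0 (restrict (y(t := v)) I) \<partial>M t) = indicator N0 y * emeasure (M t) (space (M t))"
      using restrict_upd_eq[OF y assms(2)] by (simp add: nn_integral_const mult.commute)
  qed
  also have "\<dots> = (\<integral>\<^sup>+ y. indicator N0 y \<partial>Pi\<^sub>M I M) * emeasure (M t) (space (M t))"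
    by (rule nn_integral_multc) (use N0(3) in simp)
  also have "\<dots> = 0" using N0 by simp
  finally have "?S \<in> null_sets (Pi\<^sub>M (insert t I) M)" using S by blast
  moreover have "{x\<in>space (Pi\<^sub>M (insert t I) M). \<not> R (restrict x I)} \<subseteq> ?S"
  proof
    fix x assume x: "x \<in> {x\<in>space (Pi\<^sub>M (insert t I) M). \<not> R (restrict x I)}"
    have "restrict x I \<in> space (Pi\<^sub>M I M)" using measurable_space[OF rm] x by blast
    then show "x \<in> ?S" using x N0(1) by blast
  qed
  ultimately show ?thesis by (rule AE_I')
qed

lemma fallback:
  assumes "finite A" "q \<in> borel_measurable (Pi\<^sub>M A M)" "(\<integral>\<^sup>+ x. q x \<partial>Pi\<^sub>M A M) = 1" "s \<in> A"
  shows "\<exists>g. g \<in> borel_measurable (M s) \<and> (\<forall>v\<in>space (M s). 0 \<le> g v) \<and> (\<integral>\<^sup>+ v. ennreal (g v) \<partial>M s) = 1"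
proof -
  define B where "B = A - {s}"
  have AB: "A = insert s B" "s \<notin> B" "finite B" using assms(1,4) by (auto simp: B_def)
  have qm: "q \<in> borel_measurable (Pi\<^sub>M (insert s B) M)" using assms(2) AB(1) by simp
  define h where "h v = (\<integral>\<^sup>+ y. q (y(s := v)) \<partial>Pi\<^sub>M B M)" for v
  interpret B: sigma_finite_measure "Pi\<^sub>M B M" using sigma_finite[OF AB(3)] .
  have hm: "h \<in> borel_measurable (M s)"
    unfolding h_def by (rule B.borel_measurable_nn_integral) (use add_dim_meas_swap[OF qm] in simp)
  have hi: "(\<integral>\<^sup>+ v. h v \<partial>M s) = 1"
    using product_nn_integral_insert_rev[OF AB(3,2) qm] assms(3) AB(1) unfolding h_def by simp
  have fin: "AE v in M s. h v \<noteq> \<infinity>" using nn_integral_PInf_AE[OF hm] hi by simp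
  show ?thesis
  proof (intro exI conjI ballI)
    show "(\<lambda>v. enn2real (h v)) \<in> borel_measurable (M s)" using hm by measurable
    show "\<And>v. 0 \<le> enn2real (h v)" by simp
    have "(\<integral>\<^sup>+ v. ennreal (enn2real (h v)) \<partial>M s) = (\<integral>\<^sup>+ v. h v \<partial>M s)"
      by (rule nn_integral_cong_AE) (use fin in \<open>auto simp: top.not_eq_extremum\<close>)
    then show "(\<integral>\<^sup>+ v. ennreal (enn2real (h v)) \<partial>M s) = 1" using hi by simp
  qed
qed

end

context product_sigma_finite
begin

lemma chain:
  fixes ord :: "'i \<Rightarrow> nat"
  assumes "finite A" "inj_on ord A"
    "\<forall>s\<in>A. \<exists>g. g \<in> borel_measurable (M s) \<and> (\<forall>v\<in>space (M s). 0 \<le> g v) \<and> (\<integral>\<^sup>+ v. ennreal (g v) \<partial>M s) = 1"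
    "q \<in> borel_measurable (Pi\<^sub>M A M)" "(\<integral>\<^sup>+ x. q x \<partial>Pi\<^sub>M A M) = 1"
  shows "\<exists>k. (\<forall>s\<in>A. kf M {u\<in>A. ord u < ord s} s (k s)) \<and>
    (AE x in Pi\<^sub>M A M. q x = (\<Prod>s\<in>A. ennreal (k s (x s) (restrict x {u\<in>A. ord u < ord s}))))"
  using assms
proof (induction A arbitrary: q rule: finite_psubset_induct)
  case (psubset A)
  note inj = psubset.prems(1) and fb = psubset.prems(2) and qm = psubset.prems(3) and qi = psubset.prems(4)
  show ?case
  proof (cases "A = {}")
    case True
    have "q (\<lambda>_. undefined) = 1" using qi True by (simp add: nn_integral_empty)
    then have ae0: "AE x in Pi\<^sub>M A M. q x = (\<Prod>s\<in>A. ennreal ((\<lambda>_ _ _. 0) s (x s) (restrict x {u\<in>A. ord u < ord s})))"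
      using True by (intro AE_I2) (simp add: space_PiM_empty)
    show ?thesis
      by (rule exI[of _ "\<lambda>_ _ _. 0"], rule conjI) (use True ae0 in simp_all)
  next
    case False
    have "Max (ord ` A) \<in> ord ` A" using psubset.hyps False by (intro Max_in) auto
    then obtain t where t: "t \<in> A" "ord t = Max (ord ` A)" by (metis imageE)
    have tmax: "\<And>u. u \<in> A \<Longrightarrow> ord u \<le> ord t" using t psubset.hyps by simp
    define A' where "A' = A - {t}"
    have AA: "A = insert t A'" "t \<notin> A'" "finite A'" "A' \<subset> A" using t psubset.hyps by (auto simp: A'_def)
    have lt: "\<And>u. u \<in> A' \<Longrightarrow> ord u < ord t"
    proof -
      fix u assume u: "u \<in> A'"
      then have "u \<in> A" "u \<noteq> t" by (auto simp: A'_def)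
      then have "ord u \<noteq> ord t" using inj t(1) by (auto dest: inj_onD)
      then show "ord u < ord t" using tmax[OF \<open>u \<in> A\<close>] by simp
    qed
    have Pt: "{u\<in>A. ord u < ord t} = A'" using lt by (auto simp: A'_def)
    have Ps: "{u\<in>A. ord u < ord s} = {u\<in>A'. ord u < ord s}" if s: "s \<in> A'" for s
    proof -
      have "ord s < ord t" using lt[OF s] .
      then show ?thesis by (auto simp: A'_def)
    qed
    have qm': "q \<in> borel_measurable (Pi\<^sub>M (insert t A') M)" using qm AA(1) by simp
    define q' where "q' y = (\<integral>\<^sup>+ v. q (y(t := v)) \<partial>M t)" for y
    have q'm: "q' \<in> borel_measurable (Pi\<^sub>M A' M)"
      unfolding q'_def by (rule sigma_finite_measure.borel_measurable_nn_integral[OF sigma_finite_measures]) (use add_dim_meas[OF qm'] in simp)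
    have q'i: "(\<integral>\<^sup>+ y. q' y \<partial>Pi\<^sub>M A' M) = 1"
      using product_nn_integral_insert[OF AA(3,2) qm'] qi AA(1) unfolding q'_def by simp
    obtain k' where k': "\<forall>s\<in>A'. kf M {u\<in>A'. ord u < ord s} s (k' s)"
      and k'ae: "AE y in Pi\<^sub>M A' M. q' y = (\<Prod>s\<in>A'. ennreal (k' s (y s) (restrict y {u\<in>A'. ord u < ord s})))"
    proof -
      have "inj_on ord A'" using inj AA(4) inj_on_subset by blast
      moreover have "\<forall>s\<in>A'. \<exists>g. g \<in> borel_measurable (M s) \<and> (\<forall>v\<in>space (M s). 0 \<le> g v) \<and> (\<integral>\<^sup>+ v. ennreal (g v) \<partial>M s) = 1"
        using fb AA(4) by blast
      ultimately show ?thesis using psubset.IH[OF AA(4) _ _ q'm q'i] that by blast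
    qed
    obtain g where g: "g \<in> borel_measurable (M t)" "\<forall>v\<in>space (M t). 0 \<le> g v" "(\<integral>\<^sup>+ v. ennreal (g v) \<partial>M t) = 1"
      using fb t(1) by blast
    define kt where "kt v y = (if 0 < q' y \<and> q' y < \<infinity> then enn2real (q (y(t := v)) / q' y) else g v)" for v y
    define k where "k = k'(t := kt)"
    have kft: "kf M A' t kt"
      unfolding kf_def
    proof (intro conjI ballI)
      have q'2: "(\<lambda>p. q' (snd p)) \<in> borel_measurable (M t \<Otimes>\<^sub>M Pi\<^sub>M A' M)"
        using measurable_compose[OF measurable_snd q'm] .
      have "(\<lambda>(v, y). q (y(t := v))) = (\<lambda>p. q ((snd p)(t := fst p)))" by (simp add: fun_eq_iff split_beta)
      then have q2: "(\<lambda>p. q ((snd p)(t := fst p))) \<in> borel_measurable (M t \<Otimes>\<^sub>M Pi\<^sub>M A' M)"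
        using add_dim_meas_swap[OF qm'] by simp
      have g2: "(\<lambda>p. g (fst p)) \<in> borel_measurable (M t \<Otimes>\<^sub>M Pi\<^sub>M A' M)"
        using measurable_compose[OF measurable_fst g(1)] .
      have "(\<lambda>p. if 0 < q' (snd p) \<and> q' (snd p) < \<infinity> then enn2real (q ((snd p)(t := fst p)) / q' (snd p)) else g (fst p))
          \<in> borel_measurable (M t \<Otimes>\<^sub>M Pi\<^sub>M A' M)"
        using q'2 q2 g2 by measurable
      moreover have "(\<lambda>(v, y). kt v y) = (\<lambda>p. if 0 < q' (snd p) \<and> q' (snd p) < \<infinity> then enn2real (q ((snd p)(t := fst p)) / q' (snd p)) else g (fst p))"
        by (simp add: fun_eq_iff split_beta kt_def)
      ultimately show "(\<lambda>(v, y). kt v y) \<in> borel_measurable (M t \<Otimes>\<^sub>M Pi\<^sub>M A' M)" by simp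
    next
      fix v y assume "v \<in> space (M t)" "y \<in> space (Pi\<^sub>M A' M)"
      then show "0 \<le> kt v y" using g(2) by (simp add: kt_def)
    next
      fix y assume y: "y \<in> space (Pi\<^sub>M A' M)"
      show "(\<integral>\<^sup>+ v. ennreal (kt v y) \<partial>M t) = 1"
      proof (cases "0 < q' y \<and> q' y < \<infinity>")
        case True
        have qv: "(\<lambda>v. q (y(t:=v))) \<in> borel_measurable (M t)"
          using measurable_compose[OF measurable_component_update[OF y AA(2)] qm'] .
        have fin: "AE v in M t. q (y(t:=v)) \<noteq> \<infinity>"
          using nn_integral_PInf_AE[OF qv] True unfolding q'_def by (simp add: less_top)
        have "(\<integral>\<^sup>+ v. ennreal (kt v y) \<partial>M t) = (\<integral>\<^sup>+ v. q (y(t:=v)) / q' y \<partial>M t)"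
          using fin
        proof (rule nn_integral_cong_AE[OF eventually_mono])
          fix v assume v: "q (y(t:=v)) \<noteq> \<infinity>"
          have "q (y(t:=v)) / q' y \<noteq> top" using v True by (auto simp: ennreal_divide_eq_top_iff)
          then show "ennreal (kt v y) = q (y(t:=v)) / q' y" using True by (simp add: kt_def less_top)
        qed
        also have "\<dots> = (\<integral>\<^sup>+ v. q (y(t:=v)) \<partial>M t) / q' y" by (rule nn_integral_divide[OF qv])
        also have "\<dots> = 1" using True unfolding q'_def by (intro ennreal_divide_self) auto
        finally show ?thesis .
      next
        case False
        have "(\<integral>\<^sup>+ v. ennreal (kt v y) \<partial>M t) = (\<integral>\<^sup>+ v. ennreal (g v) \<partial>M t)"
        proof (rule nn_integral_cong)
          fix v show "ennreal (kt v y) = ennreal (g v)" unfolding kt_def by (subst if_not_P[OF False]) (rule refl)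
        qed
        then show ?thesis using g(3) by simp
      qed
    qed
    have kf: "\<forall>s\<in>A. kf M {u\<in>A. ord u < ord s} s (k s)"
    proof
      fix s assume s: "s \<in> A"
      show "kf M {u\<in>A. ord u < ord s} s (k s)"
      proof (cases "s = t")
        case True
        then show ?thesis using kft Pt by (simp add: k_def)
      next
        case False
        then have "s \<in> A'" using s by (simp add: A'_def)
        then show ?thesis using k' Ps[of s] False by (simp add: k_def)
      qed
    qed
    have PA: "Pi\<^sub>M A M = Pi\<^sub>M (insert t A') M" using AA(1) by simp
    have rm: "(\<lambda>x. restrict x A') \<in> Pi\<^sub>M (insert t A') M \<rightarrow>\<^sub>M Pi\<^sub>M A' M"
      by (rule measurable_restrict_subset) blast
    have a1: "AE x in Pi\<^sub>M A M. q x \<noteq> \<infinity>" using nn_integral_PInf_AE[OF qm] qi by simp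
    have "AE x in Pi\<^sub>M (insert t A') M. q' (restrict x A') \<noteq> \<infinity>"
      using AE_restrict_insert[OF AA(3,2), of "\<lambda>y. q' y \<noteq> \<infinity>"] nn_integral_PInf_AE[OF q'm] q'i by simp
    then have a2: "AE x in Pi\<^sub>M A M. q' (restrict x A') \<noteq> \<infinity>" unfolding PA .
    have "AE x in Pi\<^sub>M (insert t A') M. q' (restrict x A') = (\<Prod>s\<in>A'. ennreal (k' s ((restrict x A') s) (restrict (restrict x A') {u\<in>A'. ord u < ord s})))"
      using AE_restrict_insert[OF AA(3,2) k'ae] by simp
    then have a4: "AE x in Pi\<^sub>M A M. q' (restrict x A') = (\<Prod>s\<in>A'. ennreal (k' s ((restrict x A') s) (restrict (restrict x A') {u\<in>A'. ord u < ord s})))"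
      unfolding PA .
    define Z where "Z = {y \<in> space (Pi\<^sub>M A' M). q' y = 0}"
    have Z: "Z \<in> sets (Pi\<^sub>M A' M)" unfolding Z_def using q'm by measurable
    have fm: "(\<lambda>x. q x * indicator Z (restrict x A')) \<in> borel_measurable (Pi\<^sub>M (insert t A') M)"
    proof -
      have "(\<lambda>x. indicator Z (restrict x A') :: ennreal) \<in> borel_measurable (Pi\<^sub>M (insert t A') M)"
        using measurable_compose[OF rm borel_measurable_indicator[OF Z]] .
      then show ?thesis using qm' by measurable
    qed
    have "(\<integral>\<^sup>+ x. q x * indicator Z (restrict x A') \<partial>Pi\<^sub>M (insert t A') M)
        = (\<integral>\<^sup>+ y. (\<integral>\<^sup>+ v. q (y(t := v)) * indicator Z (restrict (y(t := v)) A') \<partial>M t) \<partial>Pi\<^sub>M A' M)"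
      by (rule product_nn_integral_insert[OF AA(3,2) fm])
    also have "\<dots> = (\<integral>\<^sup>+ y. 0 \<partial>Pi\<^sub>M A' M)"
    proof (rule nn_integral_cong)
      fix y assume y: "y \<in> space (Pi\<^sub>M A' M)"
      have qv: "(\<lambda>v. q (y(t:=v))) \<in> borel_measurable (M t)"
        using measurable_compose[OF measurable_component_update[OF y AA(2)] qm'] .
      have "(\<integral>\<^sup>+ v. q (y(t := v)) * indicator Z (restrict (y(t := v)) A') \<partial>M t)
          = (\<integral>\<^sup>+ v. q (y(t := v)) * indicator Z y \<partial>M t)"
        using restrict_upd_eq[OF y AA(2)] by simp
      also have "\<dots> = q' y * indicator Z y" unfolding q'_def by (rule nn_integral_multc[OF qv])
      also have "\<dots> = 0" by (simp add: Z_def indicator_def)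
      finally show "(\<integral>\<^sup>+ v. q (y(t := v)) * indicator Z (restrict (y(t := v)) A') \<partial>M t) = 0" .
    qed
    also have "\<dots> = 0" by simp
    finally have "AE x in Pi\<^sub>M (insert t A') M. q x * indicator Z (restrict x A') = 0"
      using nn_integral_0_iff_AE[OF fm] by simp
    then have a3': "AE x in Pi\<^sub>M A M. q x * indicator Z (restrict x A') = 0" unfolding PA .
    have ae: "AE x in Pi\<^sub>M A M. q x = (\<Prod>s\<in>A. ennreal (k s (x s) (restrict x {u\<in>A. ord u < ord s})))"
      using a1 a2 a3' a4 AE_space
    proof eventually_elim
      case (elim x)
      let ?y = "restrict x A'"
      have xs: "x \<in> space (Pi\<^sub>M (insert t A') M)" using elim(5) PA by simp
      have yx: "?y(t := x t) = x" using upd_restrict_eq[OF xs AA(2)] .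
      have ys: "?y \<in> space (Pi\<^sub>M A' M)" using measurable_space[OF rm xs] .
      have "(\<Prod>s\<in>A. ennreal (k s (x s) (restrict x {u\<in>A. ord u < ord s})))
          = ennreal (k t (x t) (restrict x {u\<in>A. ord u < ord t})) * (\<Prod>s\<in>A'. ennreal (k s (x s) (restrict x {u\<in>A. ord u < ord s})))"
        unfolding A'_def by (rule prod.remove[OF psubset.hyps t(1)])
      also have "ennreal (k t (x t) (restrict x {u\<in>A. ord u < ord t})) = ennreal (kt (x t) ?y)"
        unfolding Pt by (simp add: k_def)
      also have "(\<Prod>s\<in>A'. ennreal (k s (x s) (restrict x {u\<in>A. ord u < ord s})))
          = (\<Prod>s\<in>A'. ennreal (k' s (?y s) (restrict ?y {u\<in>A'. ord u < ord s})))"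
      proof (rule prod.cong[OF refl])
        fix s assume s: "s \<in> A'"
        then have st: "s \<noteq> t" using AA(2) by blast
        have "restrict ?y {u\<in>A'. ord u < ord s} = restrict x {u\<in>A'. ord u < ord s}"
          by (simp add: restrict_def fun_eq_iff)
        then show "ennreal (k s (x s) (restrict x {u\<in>A. ord u < ord s})) = ennreal (k' s (?y s) (restrict ?y {u\<in>A'. ord u < ord s}))"
          using s st Ps[OF s] by (simp add: k_def)
      qed
      also have "\<dots> = q' ?y" using elim(4) by simp
      finally have R: "(\<Prod>s\<in>A. ennreal (k s (x s) (restrict x {u\<in>A. ord u < ord s}))) = ennreal (kt (x t) ?y) * q' ?y" .
      show ?case
      proof (cases "0 < q' ?y")
        case True
        have c: "0 < q' ?y \<and> q' ?y < \<infinity>" using True elim(2) by (simp add: less_top)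
        have qf: "q x / q' ?y \<noteq> top" using elim(1) c by (auto simp: ennreal_divide_eq_top_iff)
        have "ennreal (kt (x t) ?y) = q x / q' ?y"
          using c qf yx by (simp add: kt_def less_top)
        then have "ennreal (kt (x t) ?y) * q' ?y = q x * (q' ?y / q' ?y)" by (simp add: ennreal_divide_times)
        also have "\<dots> = q x" using c by (subst ennreal_divide_self) auto
        finally show ?thesis using R by simp
      next
        case False
        then have z: "q' ?y = 0" by simp
        then have "?y \<in> Z" using ys by (simp add: Z_def)
        then have "q x = 0" using elim(3) by simp
        then show ?thesis using R z by simp
      qed
    qed
    show ?thesis using kf ae by blast
  qed
qed

end

context product_sigma_finite
begin

lemma fold_AB:
  assumes "finite N" "A \<subseteq> N" "h \<in> borel_measurable (Pi\<^sub>M N M)"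
  shows "(\<integral>\<^sup>+ x. h x \<partial>Pi\<^sub>M N M) = (\<integral>\<^sup>+ xa. (\<integral>\<^sup>+ y. h (merge A (N - A) (xa, y)) \<partial>Pi\<^sub>M (N - A) M) \<partial>Pi\<^sub>M A M)"
proof -
  have U: "A \<union> (N - A) = N" using assms(2) by blast
  have fA: "finite A" "finite (N - A)" using assms(1,2) finite_subset by auto
  have hm: "h \<in> borel_measurable (Pi\<^sub>M (A \<union> (N - A)) M)" using U assms(3) by simp
  have D: "A \<inter> (N - A) = {}" by blast
  show ?thesis using product_nn_integral_fold[OF D fA hm] unfolding U .
qed

lemma merge_AB:
  assumes "A \<subseteq> N" "xa \<in> space (Pi\<^sub>M A M)" "y \<in> space (Pi\<^sub>M (N - A) M)"
  shows "merge A (N - A) (xa, y) \<in> space (Pi\<^sub>M N M)"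
    "restrict (merge A (N - A) (xa, y)) A = xa"
    "restrict (merge A (N - A) (xa, y)) (N - A) = y"
proof -
  have U: "A \<union> (N - A) = N" using assms(1) by blast
  have D: "A \<inter> (N - A) = {}" by blast
  have "merge A (N - A) (xa, y) \<in> space (Pi\<^sub>M (A \<union> (N - A)) M)"
    using measurable_space[OF measurable_merge, of "(xa, y)" A M "N - A"] assms(2,3)
    by (simp add: space_pair_measure)
  then show "merge A (N - A) (xa, y) \<in> space (Pi\<^sub>M N M)" unfolding U .
  have "xa \<in> extensional A" "y \<in> extensional (N - A)" using assms(2,3) by (auto simp: space_PiM PiE_def)
  then show "restrict (merge A (N - A) (xa, y)) A = xa" "restrict (merge A (N - A) (xa, y)) (N - A) = y"
    using D by (simp_all add: extensional_restrict)
qed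

lemma restrict_meas: "B \<subseteq> N \<Longrightarrow> (\<lambda>x. restrict x B) \<in> Pi\<^sub>M N M \<rightarrow>\<^sub>M Pi\<^sub>M B M"
  by (rule measurable_restrict_subset)

lemma pair_merge_meas:
  assumes "A \<subseteq> N"
  shows "merge A (N - A) \<in> (Pi\<^sub>M A M \<Otimes>\<^sub>M Pi\<^sub>M (N - A) M) \<rightarrow>\<^sub>M Pi\<^sub>M N M"
proof -
  have U: "A \<union> (N - A) = N" using assms(1) by blast
  show ?thesis using measurable_merge[of A "N - A" M] unfolding U .
qed

lemma part_b:
  assumes fin: "finite N" and dag: "is_dag N E" and AN: "A \<subseteq> N" and anc: "\<forall>s\<in>A. pa E s \<subseteq> A"
    and PG: "in_PG M N E P"
  shows "\<exists>K. in_KG M N (E - {(s, t). (s, t) \<in> E \<and> s \<in> A \<and> t \<in> A}) A K \<and> cond_version M N A P K"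
proof -
  define H where "H = E - {(s, t). (s, t) \<in> E \<and> s \<in> A \<and> t \<in> A}"
  define B where "B = N - A"
  obtain k where kk: "\<forall>s\<in>N. kernel_fun M E s (k s)"
    and Pd: "P = density (Pi\<^sub>M N M) (\<lambda>x. \<Prod>s\<in>N. ennreal (k s (x s) (restrict x (pa E s))))"
    using PG unfolding in_PG_def by blast
  have EN: "E \<subseteq> N \<times> N" "acyclic E" using dag unfolding is_dag_def by blast+
  have paN: "\<And>s. pa E s \<subseteq> N" using EN(1) unfolding pa_def by blast
  have paH: "\<And>s. s \<notin> A \<Longrightarrow> pa H s = pa E s" unfolding pa_def H_def by blast
  have kf: "\<And>s. s \<in> N \<Longrightarrow> kf M (pa E s) s (k s)" using kk by (simp add: kernel_fun_kf)
  have finB: "finite B" "finite A" using fin AN by (auto simp: B_def intro: finite_subset)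
  have AB: "A \<inter> B = {}" "A \<union> B = N" using AN by (auto simp: B_def)
  define FK where "FK xa y = (\<Prod>s\<in>B. ennreal (k s (y s) (restrict (merge A B (xa, y)) (pa E s))))" for xa y
  define FA where "FA xa = (\<Prod>s\<in>A. ennreal (k s (xa s) (restrict xa (pa E s))))" for xa
  define F where "F x = (\<Prod>s\<in>N. ennreal (k s (x s) (restrict x (pa E s))))" for x
  define K where "K xa = density (Pi\<^sub>M (N - A) M) (\<lambda>y. \<Prod>s\<in>N - A. ennreal (k s (y s) (restrict (merge A (N - A) (xa, y)) (pa H s))))" for xa
  have KFK: "K xa = density (Pi\<^sub>M B M) (FK xa)" for xa
  proof -
    have "(\<lambda>y. \<Prod>s\<in>N - A. ennreal (k s (y s) (restrict (merge A (N - A) (xa, y)) (pa H s))))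
        = (\<lambda>y. \<Prod>s\<in>N - A. ennreal (k s (y s) (restrict (merge A (N - A) (xa, y)) (pa E s))))"
      by (intro ext prod.cong refl) (simp add: paH)
    then show ?thesis unfolding K_def FK_def B_def by simp
  qed
  have FKmerge: "FK xa y = (\<Prod>s\<in>B. ennreal (k s (merge A B (xa, y) s) (restrict (merge A B (xa, y)) (pa E s))))" for xa y
    unfolding FK_def by (intro prod.cong refl) (simp add: merge_def B_def)
  have FKm: "(\<lambda>p. FK (fst p) (snd p)) \<in> borel_measurable (Pi\<^sub>M A M \<Otimes>\<^sub>M Pi\<^sub>M B M)"
  proof -
    have "(\<lambda>p. \<Prod>s\<in>B. ennreal (k s (merge A B p s) (restrict (merge A B p) (pa E s)))) \<in> borel_measurable (Pi\<^sub>M A M \<Otimes>\<^sub>M Pi\<^sub>M B M)"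
      by (rule kf_meas_prod[OF _ pair_merge_meas[OF AN, folded B_def]]) (use kf paN in \<open>auto simp: B_def\<close>)
    moreover have "(\<lambda>p. FK (fst p) (snd p)) = (\<lambda>p. \<Prod>s\<in>B. ennreal (k s (merge A B p s) (restrict (merge A B p) (pa E s))))"
      by (simp add: fun_eq_iff FKmerge)
    ultimately show ?thesis by simp
  qed
  have FKm1: "FK xa \<in> borel_measurable (Pi\<^sub>M B M)" if xa: "xa \<in> space (Pi\<^sub>M A M)" for xa
    using measurable_Pair2[OF FKm xa] by simp
  have int1: "(\<integral>\<^sup>+ y. FK xa y \<partial>Pi\<^sub>M B M) = 1" if xa: "xa \<in> space (Pi\<^sub>M A M)" for xa
    unfolding FK_def
  proof (rule int_one[OF finB(1) EN(2) AB(1) _ _ xa])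
    show "\<forall>s\<in>B. kf M (pa E s) s (k s)" using kf by (simp add: B_def)
    show "\<forall>s\<in>B. pa E s \<subseteq> A \<union> B" using paN AB(2) by blast
  qed
  have Kprob: "prob_space (K xa)" if xa: "xa \<in> space (Pi\<^sub>M A M)" for xa
  proof (rule prob_spaceI)
    have "emeasure (K xa) (space (K xa)) = (\<integral>\<^sup>+ y. FK xa y * indicator (space (Pi\<^sub>M B M)) y \<partial>Pi\<^sub>M B M)"
      unfolding KFK by (simp add: emeasure_density[OF FKm1[OF xa]])
    also have "\<dots> = (\<integral>\<^sup>+ y. FK xa y \<partial>Pi\<^sub>M B M)" by (rule nn_integral_cong) simp
    finally show "emeasure (K xa) (space (K xa)) = 1" using int1[OF xa] by simp
  qed
  have Kem: "emeasure (K xa) X = (\<integral>\<^sup>+ y. FK xa y * indicator X y \<partial>Pi\<^sub>M B M)"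
    if xa: "xa \<in> space (Pi\<^sub>M A M)" and X: "X \<in> sets (Pi\<^sub>M B M)" for xa X
    unfolding KFK by (rule emeasure_density[OF FKm1[OF xa] X])
  have Km: "K \<in> Pi\<^sub>M A M \<rightarrow>\<^sub>M prob_algebra (Pi\<^sub>M B M)"
  proof (rule measurable_prob_algebraI)
    show "\<And>x. x \<in> space (Pi\<^sub>M A M) \<Longrightarrow> prob_space (K x)" by (rule Kprob)
    show "K \<in> Pi\<^sub>M A M \<rightarrow>\<^sub>M subprob_algebra (Pi\<^sub>M B M)"
    proof (rule measurable_subprob_algebra)
      show "\<And>a. a \<in> space (Pi\<^sub>M A M) \<Longrightarrow> subprob_space (K a)"
        using Kprob prob_space_imp_subprob_space by blast
      show "\<And>a. a \<in> space (Pi\<^sub>M A M) \<Longrightarrow> sets (K a) = sets (Pi\<^sub>M B M)" by (simp add: KFK)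
      fix X assume X: "X \<in> sets (Pi\<^sub>M B M)"
      interpret PB: sigma_finite_measure "Pi\<^sub>M B M" using sigma_finite[OF finB(1)] .
      have "(\<lambda>p. FK (fst p) (snd p) * indicator X (snd p)) \<in> borel_measurable (Pi\<^sub>M A M \<Otimes>\<^sub>M Pi\<^sub>M B M)"
        using FKm X by measurable
      then have "(\<lambda>a. \<integral>\<^sup>+ y. FK a y * indicator X y \<partial>Pi\<^sub>M B M) \<in> borel_measurable (Pi\<^sub>M A M)"
        by (intro PB.borel_measurable_nn_integral) (simp add: split_beta)
      then show "(\<lambda>a. emeasure (K a) X) \<in> borel_measurable (Pi\<^sub>M A M)"
        by (rule measurable_cong[THEN iffD2, rotated]) (simp add: Kem[OF _ X])
    qed
  qed
  have KG: "in_KG M N H A K"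
    unfolding in_KG_def
  proof (intro conjI exI[of _ k] ballI)
    show "K \<in> Pi\<^sub>M A M \<rightarrow>\<^sub>M prob_algebra (Pi\<^sub>M (N - A) M)" using Km by (simp add: B_def)
    show "\<And>s. s \<in> N - A \<Longrightarrow> kernel_fun M H s (k s)" using kf paH by (simp add: kernel_fun_kf)
    show "\<And>xa. xa \<in> space (Pi\<^sub>M A M) \<Longrightarrow> K xa = density (Pi\<^sub>M (N - A) M) (\<lambda>y. \<Prod>s\<in>N - A. ennreal (k s (y s) (restrict (merge A (N - A) (xa, y)) (pa H s))))"
      by (simp add: K_def)
  qed
  have Fm: "F \<in> borel_measurable (Pi\<^sub>M N M)"
    unfolding F_def using kf_meas_prod[OF kf measurable_ident_sets[OF refl] paN, of N] by simp
  have factor: "F (merge A B (xa, y)) = FA xa * FK xa y"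
    if xa: "xa \<in> space (Pi\<^sub>M A M)" and y: "y \<in> space (Pi\<^sub>M B M)" for xa y
  proof -
    have "F (merge A B (xa, y)) = (\<Prod>s\<in>A \<union> B. ennreal (k s (merge A B (xa, y) s) (restrict (merge A B (xa, y)) (pa E s))))"
      unfolding F_def AB(2) ..
    also have "\<dots> = (\<Prod>s\<in>A. ennreal (k s (merge A B (xa, y) s) (restrict (merge A B (xa, y)) (pa E s)))) *
        (\<Prod>s\<in>B. ennreal (k s (merge A B (xa, y) s) (restrict (merge A B (xa, y)) (pa E s))))"
      by (rule prod.union_disjoint[OF finB(2) finB(1) AB(1)])
    also have "(\<Prod>s\<in>A. ennreal (k s (merge A B (xa, y) s) (restrict (merge A B (xa, y)) (pa E s)))) = FA xa"
      unfolding FA_def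
    proof (rule prod.cong[OF refl])
      fix s assume s: "s \<in> A"
      have "restrict (merge A B (xa, y)) (pa E s) = restrict xa (pa E s)"
        using anc s unfolding restrict_def merge_def by (intro ext) auto
      then show "ennreal (k s (merge A B (xa, y) s) (restrict (merge A B (xa, y)) (pa E s))) = ennreal (k s (xa s) (restrict xa (pa E s)))"
        using s by (simp add: merge_def)
    qed
    also have "(\<Prod>s\<in>B. ennreal (k s (merge A B (xa, y) s) (restrict (merge A B (xa, y)) (pa E s)))) = FK xa y"
      by (rule FKmerge[symmetric])
    finally show ?thesis .
  qed
  have fold_gen: "(\<integral>\<^sup>+ x. F x * h x \<partial>Pi\<^sub>M N M) = (\<integral>\<^sup>+ xa. (\<integral>\<^sup>+ y. FA xa * FK xa y * h (merge A B (xa, y)) \<partial>Pi\<^sub>M B M) \<partial>Pi\<^sub>M A M)"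
    if hm: "h \<in> borel_measurable (Pi\<^sub>M N M)" for h
  proof -
    have "(\<lambda>x. F x * h x) \<in> borel_measurable (Pi\<^sub>M N M)" using Fm hm by measurable
    from fold_AB[OF fin AN this, folded B_def]
    have "(\<integral>\<^sup>+ x. F x * h x \<partial>Pi\<^sub>M N M) = (\<integral>\<^sup>+ xa. (\<integral>\<^sup>+ y. F (merge A B (xa, y)) * h (merge A B (xa, y)) \<partial>Pi\<^sub>M B M) \<partial>Pi\<^sub>M A M)" .
    also have "\<dots> = (\<integral>\<^sup>+ xa. (\<integral>\<^sup>+ y. FA xa * FK xa y * h (merge A B (xa, y)) \<partial>Pi\<^sub>M B M) \<partial>Pi\<^sub>M A M)"
      by (intro nn_integral_cong) (simp add: factor)
    finally show ?thesis .
  qed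
  have rA: "(\<lambda>x. restrict x A) \<in> Pi\<^sub>M N M \<rightarrow>\<^sub>M Pi\<^sub>M A M" by (rule restrict_meas[OF AN])
  have rB: "(\<lambda>x. restrict x B) \<in> Pi\<^sub>M N M \<rightarrow>\<^sub>M Pi\<^sub>M B M" by (rule restrict_meas) (simp add: B_def)
  have mA: "restrict (merge A B (xa, y)) A = xa" "restrict (merge A B (xa, y)) B = y" "merge A B (xa, y) \<in> space (Pi\<^sub>M N M)"
    if "xa \<in> space (Pi\<^sub>M A M)" "y \<in> space (Pi\<^sub>M B M)" for xa y
    using merge_AB[OF AN, of xa y] that unfolding B_def by auto
  have sP: "sets P = sets (Pi\<^sub>M N M)" "space P = space (Pi\<^sub>M N M)" using Pd by simp_all
  have CV: "cond_version M N A P K"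
    unfolding cond_version_def
  proof (intro conjI ballI)
    show "K \<in> Pi\<^sub>M A M \<rightarrow>\<^sub>M prob_algebra (Pi\<^sub>M (N - A) M)" using Km by (simp add: B_def)
    fix X C assume X': "X \<in> sets (Pi\<^sub>M (N - A) M)" and C: "C \<in> sets (Pi\<^sub>M A M)"
    have X: "X \<in> sets (Pi\<^sub>M B M)" using X' by (simp add: B_def)
    define S where "S = {x \<in> space (Pi\<^sub>M N M). restrict x (N - A) \<in> X \<and> restrict x A \<in> C}"
    have S_eq: "S = ((\<lambda>x. restrict x B) -` X \<inter> space (Pi\<^sub>M N M)) \<inter> ((\<lambda>x. restrict x A) -` C \<inter> space (Pi\<^sub>M N M))"
      unfolding S_def B_def by blast
    have S: "S \<in> sets (Pi\<^sub>M N M)" unfolding S_eq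
      by (intro sets.Int measurable_sets[OF rB X] measurable_sets[OF rA C])
    have gm: "(\<lambda>xa. emeasure (K xa) X * indicator C xa) \<in> borel_measurable (Pi\<^sub>M A M)"
    proof -
      have "(\<lambda>xa. emeasure (K xa) X) \<in> borel_measurable (Pi\<^sub>M A M)"
        using measurable_compose[OF measurable_prob_algebraD[OF Km] measurable_emeasure_subprob_algebra[OF X]] .
      then show ?thesis using C by measurable
    qed
    have inner: "(\<integral>\<^sup>+ y. FA xa * FK xa y * c \<partial>Pi\<^sub>M B M) = FA xa * c" if xa: "xa \<in> space (Pi\<^sub>M A M)" for xa c
    proof -
      have "(\<integral>\<^sup>+ y. FA xa * FK xa y * c \<partial>Pi\<^sub>M B M) = (\<integral>\<^sup>+ y. (FA xa * c) * FK xa y \<partial>Pi\<^sub>M B M)"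
        by (simp add: ac_simps)
      also have "\<dots> = (FA xa * c) * (\<integral>\<^sup>+ y. FK xa y \<partial>Pi\<^sub>M B M)" by (rule nn_integral_cmult[OF FKm1[OF xa]])
      finally show ?thesis using int1[OF xa] by simp
    qed
    have "emeasure P S = (\<integral>\<^sup>+ x. F x * indicator S x \<partial>Pi\<^sub>M N M)"
      unfolding Pd F_def[symmetric] by (rule emeasure_density[OF Fm S])
    also have "\<dots> = (\<integral>\<^sup>+ xa. (\<integral>\<^sup>+ y. FA xa * FK xa y * indicator S (merge A B (xa, y)) \<partial>Pi\<^sub>M B M) \<partial>Pi\<^sub>M A M)"
      by (rule fold_gen) (use S in measurable)
    also have "\<dots> = (\<integral>\<^sup>+ xa. FA xa * (emeasure (K xa) X * indicator C xa) \<partial>Pi\<^sub>M A M)"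
    proof (rule nn_integral_cong)
      fix xa assume xa: "xa \<in> space (Pi\<^sub>M A M)"
      have "(\<integral>\<^sup>+ y. FA xa * FK xa y * indicator S (merge A B (xa, y)) \<partial>Pi\<^sub>M B M)
          = (\<integral>\<^sup>+ y. (FA xa * indicator C xa) * (FK xa y * indicator X y) \<partial>Pi\<^sub>M B M)"
      proof (rule nn_integral_cong)
        fix y assume y: "y \<in> space (Pi\<^sub>M B M)"
        have "indicator S (merge A B (xa, y)) = (indicator X y * indicator C xa :: ennreal)"
          using mA[OF xa y] unfolding S_def B_def by (simp add: indicator_def)
        then show "FA xa * FK xa y * indicator S (merge A B (xa, y)) = (FA xa * indicator C xa) * (FK xa y * indicator X y)"
          by (simp add: ac_simps)
      qed
      also have "\<dots> = (FA xa * indicator C xa) * (\<integral>\<^sup>+ y. FK xa y * indicator X y \<partial>Pi\<^sub>M B M)"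
        by (rule nn_integral_cmult) (use FKm1[OF xa] X in measurable)
      also have "\<dots> = FA xa * (emeasure (K xa) X * indicator C xa)"
        using Kem[OF xa X] by (simp add: ac_simps)
      finally show "(\<integral>\<^sup>+ y. FA xa * FK xa y * indicator S (merge A B (xa, y)) \<partial>Pi\<^sub>M B M) = FA xa * (emeasure (K xa) X * indicator C xa)" .
    qed
    also have "\<dots> = (\<integral>\<^sup>+ xa. (\<integral>\<^sup>+ y. FA xa * FK xa y * (emeasure (K (restrict (merge A B (xa, y)) A)) X * indicator C (restrict (merge A B (xa, y)) A)) \<partial>Pi\<^sub>M B M) \<partial>Pi\<^sub>M A M)"
    proof (rule nn_integral_cong)
      fix xa assume xa: "xa \<in> space (Pi\<^sub>M A M)"
      have "(\<integral>\<^sup>+ y. FA xa * FK xa y * (emeasure (K (restrict (merge A B (xa, y)) A)) X * indicator C (restrict (merge A B (xa, y)) A)) \<partial>Pi\<^sub>M B M)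
          = (\<integral>\<^sup>+ y. FA xa * FK xa y * (emeasure (K xa) X * indicator C xa) \<partial>Pi\<^sub>M B M)"
        by (rule nn_integral_cong) (simp add: mA[OF xa])
      also have "\<dots> = FA xa * (emeasure (K xa) X * indicator C xa)" by (rule inner[OF xa])
      finally show "FA xa * (emeasure (K xa) X * indicator C xa) = (\<integral>\<^sup>+ y. FA xa * FK xa y * (emeasure (K (restrict (merge A B (xa, y)) A)) X * indicator C (restrict (merge A B (xa, y)) A)) \<partial>Pi\<^sub>M B M)" by simp
    qed
    also have "\<dots> = (\<integral>\<^sup>+ x. F x * (emeasure (K (restrict x A)) X * indicator C (restrict x A)) \<partial>Pi\<^sub>M N M)"
      by (rule fold_gen[symmetric]) (rule measurable_compose[OF rA gm])
    also have "\<dots> = (\<integral>\<^sup>+ x. emeasure (K (restrict x A)) X * indicator C (restrict x A) \<partial>P)"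
      unfolding Pd F_def[symmetric] by (rule nn_integral_density[symmetric, OF Fm measurable_compose[OF rA gm]])
    also have "\<dots> = (\<integral>\<^sup>+ xa. emeasure (K xa) X * indicator C xa \<partial>distr P (Pi\<^sub>M A M) (\<lambda>x. restrict x A))"
    proof (rule nn_integral_distr[symmetric])
      show "(\<lambda>x. restrict x A) \<in> P \<rightarrow>\<^sub>M Pi\<^sub>M A M" using rA measurable_cong_sets[OF sP(1) refl] by blast
      show "(\<lambda>xa. emeasure (K xa) X * indicator C xa) \<in> borel_measurable (distr P (Pi\<^sub>M A M) (\<lambda>x. restrict x A))"
        using gm by simp
    qed
    finally show "emeasure P {x \<in> space (Pi\<^sub>M N M). restrict x (N - A) \<in> X \<and> restrict x A \<in> C} =
        (\<integral>\<^sup>+ xa. emeasure (K xa) X * indicator C xa \<partial>distr P (Pi\<^sub>M A M) (\<lambda>x. restrict x A))"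
      unfolding S_def .
  qed
  show ?thesis using KG CV unfolding H_def by blast
qed

lemma part_a:
  assumes fin: "finite N" and pm: "p \<in> borel_measurable (Pi\<^sub>M N M)" and Pd: "P = density (Pi\<^sub>M N M) p"
    and prob: "prob_space P"
    and dag: "is_dag N E" and topo: "topo_order N E ord" and Ar: "A \<subseteq> roots N E"
    and KG: "in_KG M N E A K" and CV: "cond_version M N A P K"
  shows "in_PG M N (E \<union> {(s, t). s \<in> A \<and> t \<in> A \<and> ord s < ord t}) P"
proof -
  define H where "H = E \<union> {(s, t). s \<in> A \<and> t \<in> A \<and> ord s < ord t}"
  define B where "B = N - A"
  have AN: "A \<subseteq> N" using Ar unfolding roots_def by blast
  have paA: "\<And>s. s \<in> A \<Longrightarrow> pa E s = {}" using Ar unfolding roots_def by blast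
  have EN: "E \<subseteq> N \<times> N" using dag unfolding is_dag_def by blast
  have paN: "\<And>s. pa E s \<subseteq> N" using EN unfolding pa_def by blast
  have paHA: "pa H s = {u\<in>A. ord u < ord s}" if s: "s \<in> A" for s
    using paA[OF s] s unfolding pa_def H_def by blast
  have paHB: "\<And>s. s \<notin> A \<Longrightarrow> pa H s = pa E s" unfolding pa_def H_def by blast
  have finB: "finite B" "finite A" using fin AN by (auto simp: B_def intro: finite_subset)
  have AB: "A \<inter> B = {}" "A \<union> B = N" using AN by (auto simp: B_def)
  obtain k where kk: "\<forall>s\<in>N - A. kernel_fun M E s (k s)"
    and Kd: "\<forall>xa\<in>space (Pi\<^sub>M A M). K xa = density (Pi\<^sub>M (N - A) M) (\<lambda>y. \<Prod>s\<in>N - A. ennreal (k s (y s) (restrict (merge A (N - A) (xa, y)) (pa E s))))"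
    and Km: "K \<in> Pi\<^sub>M A M \<rightarrow>\<^sub>M prob_algebra (Pi\<^sub>M (N - A) M)"
    using KG unfolding in_KG_def by blast
  have kf: "\<And>s. s \<in> B \<Longrightarrow> kf M (pa E s) s (k s)" using kk by (simp add: kernel_fun_kf B_def)
  define FK where "FK xa y = (\<Prod>s\<in>B. ennreal (k s (y s) (restrict (merge A B (xa, y)) (pa E s))))" for xa y
  have KFK: "K xa = density (Pi\<^sub>M B M) (FK xa)" if xa: "xa \<in> space (Pi\<^sub>M A M)" for xa
    using Kd xa unfolding FK_def B_def by simp
  have FKmerge: "FK xa y = (\<Prod>s\<in>B. ennreal (k s (merge A B (xa, y) s) (restrict (merge A B (xa, y)) (pa E s))))" for xa y
    unfolding FK_def by (intro prod.cong refl) (simp add: merge_def B_def)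
  have FKm: "(\<lambda>p. FK (fst p) (snd p)) \<in> borel_measurable (Pi\<^sub>M A M \<Otimes>\<^sub>M Pi\<^sub>M B M)"
  proof -
    have "(\<lambda>p. \<Prod>s\<in>B. ennreal (k s (merge A B p s) (restrict (merge A B p) (pa E s)))) \<in> borel_measurable (Pi\<^sub>M A M \<Otimes>\<^sub>M Pi\<^sub>M B M)"
      by (rule kf_meas_prod[OF _ pair_merge_meas[OF AN, folded B_def]]) (use kf paN in \<open>auto simp: B_def\<close>)
    moreover have "(\<lambda>p. FK (fst p) (snd p)) = (\<lambda>p. \<Prod>s\<in>B. ennreal (k s (merge A B p s) (restrict (merge A B p) (pa E s))))"
      by (simp add: fun_eq_iff FKmerge)
    ultimately show ?thesis by simp
  qed
  have FKm1: "FK xa \<in> borel_measurable (Pi\<^sub>M B M)" if xa: "xa \<in> space (Pi\<^sub>M A M)" for xa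
    using measurable_Pair2[OF FKm xa] by simp
  have Kem: "emeasure (K xa) X = (\<integral>\<^sup>+ y. FK xa y * indicator X y \<partial>Pi\<^sub>M B M)"
    if xa: "xa \<in> space (Pi\<^sub>M A M)" and X: "X \<in> sets (Pi\<^sub>M B M)" for xa X
    unfolding KFK[OF xa] by (rule emeasure_density[OF FKm1[OF xa] X])
  have rA: "(\<lambda>x. restrict x A) \<in> Pi\<^sub>M N M \<rightarrow>\<^sub>M Pi\<^sub>M A M" by (rule restrict_meas[OF AN])
  have mA: "restrict (merge A B (xa, y)) A = xa" "restrict (merge A B (xa, y)) B = y" "merge A B (xa, y) \<in> space (Pi\<^sub>M N M)"
    if "xa \<in> space (Pi\<^sub>M A M)" "y \<in> space (Pi\<^sub>M B M)" for xa y
    using merge_AB[OF AN, of xa y] that unfolding B_def by auto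
  have sP: "sets P = sets (Pi\<^sub>M N M)" "space P = space (Pi\<^sub>M N M)" using Pd by simp_all
  interpret PB: sigma_finite_measure "Pi\<^sub>M B M" using sigma_finite[OF finB(1)] .
  define q where "q xa = (\<integral>\<^sup>+ y. p (merge A B (xa, y)) \<partial>Pi\<^sub>M B M)" for xa
  have pmm: "(\<lambda>x. p (merge A B x)) \<in> borel_measurable (Pi\<^sub>M A M \<Otimes>\<^sub>M Pi\<^sub>M B M)"
    using measurable_compose[OF pair_merge_meas[OF AN, folded B_def] pm] .
  have qm: "q \<in> borel_measurable (Pi\<^sub>M A M)"
    unfolding q_def by (rule PB.borel_measurable_nn_integral) (use pmm in \<open>simp add: split_beta\<close>)
  have marg: "(\<integral>\<^sup>+ xa. g xa \<partial>distr P (Pi\<^sub>M A M) (\<lambda>x. restrict x A)) = (\<integral>\<^sup>+ xa. q xa * g xa \<partial>Pi\<^sub>M A M)"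
    if gm: "g \<in> borel_measurable (Pi\<^sub>M A M)" for g
  proof -
    have rP: "(\<lambda>x. restrict x A) \<in> P \<rightarrow>\<^sub>M Pi\<^sub>M A M" using rA measurable_cong_sets[OF sP(1) refl] by blast
    have gr: "(\<lambda>x. g (restrict x A)) \<in> borel_measurable (Pi\<^sub>M N M)" using measurable_compose[OF rA gm] .
    have "(\<integral>\<^sup>+ xa. g xa \<partial>distr P (Pi\<^sub>M A M) (\<lambda>x. restrict x A)) = (\<integral>\<^sup>+ x. g (restrict x A) \<partial>P)"
      by (rule nn_integral_distr[OF rP]) (use gm in simp)
    also have "\<dots> = (\<integral>\<^sup>+ x. p x * g (restrict x A) \<partial>Pi\<^sub>M N M)"
      unfolding Pd by (rule nn_integral_density[OF pm gr])
    also have "\<dots> = (\<integral>\<^sup>+ xa. (\<integral>\<^sup>+ y. p (merge A B (xa, y)) * g (restrict (merge A B (xa, y)) A) \<partial>Pi\<^sub>M B M) \<partial>Pi\<^sub>M A M)"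
      using fold_AB[OF fin AN, folded B_def] pm gr by simp
    also have "\<dots> = (\<integral>\<^sup>+ xa. q xa * g xa \<partial>Pi\<^sub>M A M)"
    proof (rule nn_integral_cong)
      fix xa assume xa: "xa \<in> space (Pi\<^sub>M A M)"
      have "(\<integral>\<^sup>+ y. p (merge A B (xa, y)) * g (restrict (merge A B (xa, y)) A) \<partial>Pi\<^sub>M B M)
          = (\<integral>\<^sup>+ y. p (merge A B (xa, y)) * g xa \<partial>Pi\<^sub>M B M)"
        by (rule nn_integral_cong) (simp add: mA[OF xa])
      also have "\<dots> = q xa * g xa" unfolding q_def
        by (rule nn_integral_multc) (use measurable_Pair2[OF pmm xa] in simp)
      finally show "(\<integral>\<^sup>+ y. p (merge A B (xa, y)) * g (restrict (merge A B (xa, y)) A) \<partial>Pi\<^sub>M B M) = q xa * g xa" .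
    qed
    finally show ?thesis .
  qed
  have qi: "(\<integral>\<^sup>+ xa. q xa \<partial>Pi\<^sub>M A M) = 1"
  proof -
    have "(\<integral>\<^sup>+ xa. q xa \<partial>Pi\<^sub>M A M) = (\<integral>\<^sup>+ x. p x \<partial>Pi\<^sub>M N M)"
      unfolding q_def using fold_AB[OF fin AN pm, folded B_def] by simp
    also have "\<dots> = (\<integral>\<^sup>+ x. p x * indicator (space (Pi\<^sub>M N M)) x \<partial>Pi\<^sub>M N M)"
      by (rule nn_integral_cong) simp
    also have "\<dots> = emeasure P (space P)" unfolding sP(2) unfolding Pd
      by (rule emeasure_density[symmetric, OF pm sets.top])
    also have "\<dots> = 1" using prob by (simp add: prob_space.emeasure_space_1)
    finally show ?thesis .
  qed
  have fb: "\<forall>s\<in>A. \<exists>g. g \<in> borel_measurable (M s) \<and> (\<forall>v\<in>space (M s). 0 \<le> g v) \<and> (\<integral>\<^sup>+ v. ennreal (g v) \<partial>M s) = 1"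
    using fallback[OF finB(2) qm qi] by blast
  have inj: "inj_on ord A"
    using topo AN unfolding topo_order_def by (meson bij_betw_imp_inj_on inj_on_subset)
  obtain kA where kfA: "\<forall>s\<in>A. kf M {u\<in>A. ord u < ord s} s (kA s)"
    and aeA: "AE xa in Pi\<^sub>M A M. q xa = (\<Prod>s\<in>A. ennreal (kA s (xa s) (restrict xa {u\<in>A. ord u < ord s})))"
    using chain[OF finB(2) inj fb qm qi] by blast
  define QA where "QA xa = (\<Prod>s\<in>A. ennreal (kA s (xa s) (restrict xa {u\<in>A. ord u < ord s})))" for xa
  define kk' where "kk' s = (if s \<in> A then kA s else k s)" for s
  have kfH: "kernel_fun M H s (kk' s)" if s: "s \<in> N" for s
  proof (cases "s \<in> A")
    case True
    then show ?thesis using kfA paHA[OF True] by (simp add: kernel_fun_kf kk'_def)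
  next
    case False
    then have "s \<in> B" using s by (simp add: B_def)
    then show ?thesis using kf False paHB[OF False] by (simp add: kernel_fun_kf kk'_def)
  qed
  define T where "T x = (\<Prod>s\<in>N. ennreal (kk' s (x s) (restrict x (pa H s))))" for x
  have paHN: "\<And>s. pa H s \<subseteq> N"
  proof -
    fix s show "pa H s \<subseteq> N"
      by (cases "s \<in> A") (use paHA paHB paN AN in auto)
  qed
  have Tm: "T \<in> borel_measurable (Pi\<^sub>M N M)"
    unfolding T_def using kf_meas_prod[OF kfH[unfolded kernel_fun_kf] measurable_ident_sets[OF refl] paHN, of N] by simp
  have factor: "T (merge A B (xa, y)) = QA xa * FK xa y"
    if xa: "xa \<in> space (Pi\<^sub>M A M)" and y: "y \<in> space (Pi\<^sub>M B M)" for xa y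
  proof -
    have "T (merge A B (xa, y)) = (\<Prod>s\<in>A \<union> B. ennreal (kk' s (merge A B (xa, y) s) (restrict (merge A B (xa, y)) (pa H s))))"
      unfolding T_def AB(2) ..
    also have "\<dots> = (\<Prod>s\<in>A. ennreal (kk' s (merge A B (xa, y) s) (restrict (merge A B (xa, y)) (pa H s)))) *
        (\<Prod>s\<in>B. ennreal (kk' s (merge A B (xa, y) s) (restrict (merge A B (xa, y)) (pa H s))))"
      by (rule prod.union_disjoint[OF finB(2) finB(1) AB(1)])
    also have "(\<Prod>s\<in>A. ennreal (kk' s (merge A B (xa, y) s) (restrict (merge A B (xa, y)) (pa H s)))) = QA xa"
      unfolding QA_def
    proof (rule prod.cong[OF refl])
      fix s assume s: "s \<in> A"
      have "restrict (merge A B (xa, y)) (pa H s) = restrict xa {u\<in>A. ord u < ord s}"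
        unfolding paHA[OF s] restrict_def merge_def by (intro ext) auto
      then show "ennreal (kk' s (merge A B (xa, y) s) (restrict (merge A B (xa, y)) (pa H s))) = ennreal (kA s (xa s) (restrict xa {u\<in>A. ord u < ord s}))"
        using s by (simp add: merge_def kk'_def)
    qed
    also have "(\<Prod>s\<in>B. ennreal (kk' s (merge A B (xa, y) s) (restrict (merge A B (xa, y)) (pa H s)))) = FK xa y"
      unfolding FKmerge
    proof (rule prod.cong[OF refl])
      fix s assume s: "s \<in> B"
      then have "s \<notin> A" by (simp add: B_def)
      then show "ennreal (kk' s (merge A B (xa, y) s) (restrict (merge A B (xa, y)) (pa H s))) = ennreal (k s (merge A B (xa, y) s) (restrict (merge A B (xa, y)) (pa E s)))"
        by (simp add: kk'_def paHB)
    qed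
    finally show ?thesis .
  qed
  have eqX: "emeasure P X = emeasure (density (Pi\<^sub>M N M) T) X" if X: "X \<in> prod_algebra N M" for X
  proof -
    obtain Y where Y: "X = Pi\<^sub>E N Y" "Y \<in> (\<Pi> i\<in>N. sets (M i))" using prod_algebraE_all[OF X] by blast
    have Ysp: "\<forall>i\<in>N. Y i \<subseteq> space (M i)" using Y(2) sets.sets_into_space by blast
    define XB where "XB = Pi\<^sub>E B Y"
    define XA where "XA = Pi\<^sub>E A Y"
    have XB: "XB \<in> sets (Pi\<^sub>M B M)" unfolding XB_def using Y(2) finB(1) by (intro sets_PiM_I_finite) (auto simp: B_def)
    have XA: "XA \<in> sets (Pi\<^sub>M A M)" unfolding XA_def using Y(2) finB(2) AN by (intro sets_PiM_I_finite) auto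
    have Xeq: "X = {x \<in> space (Pi\<^sub>M N M). restrict x (N - A) \<in> XB \<and> restrict x A \<in> XA}"
      unfolding Y(1) XB_def XA_def B_def using Ysp AN by (auto simp: space_PiM PiE_iff extensional_def)
    have Xs: "X \<in> sets (Pi\<^sub>M N M)" unfolding Y(1) using Y(2) fin by (intro sets_PiM_I_finite) auto
    have gm: "(\<lambda>xa. emeasure (K xa) XB * indicator XA xa) \<in> borel_measurable (Pi\<^sub>M A M)"
    proof -
      have "(\<lambda>xa. emeasure (K xa) XB) \<in> borel_measurable (Pi\<^sub>M A M)"
        using measurable_compose[OF measurable_prob_algebraD[OF Km] measurable_emeasure_subprob_algebra[OF XB[unfolded B_def]]] .
      then show ?thesis using XA by measurable
    qed
    have "emeasure P X = (\<integral>\<^sup>+ xa. emeasure (K xa) XB * indicator XA xa \<partial>distr P (Pi\<^sub>M A M) (\<lambda>x. restrict x A))"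
      using CV XB XA unfolding cond_version_def Xeq B_def by blast
    also have "\<dots> = (\<integral>\<^sup>+ xa. q xa * (emeasure (K xa) XB * indicator XA xa) \<partial>Pi\<^sub>M A M)"
      by (rule marg[OF gm])
    also have "\<dots> = (\<integral>\<^sup>+ xa. QA xa * (emeasure (K xa) XB * indicator XA xa) \<partial>Pi\<^sub>M A M)"
      by (rule nn_integral_cong_AE) (use aeA in \<open>auto simp: QA_def\<close>)
    also have "\<dots> = (\<integral>\<^sup>+ xa. (\<integral>\<^sup>+ y. T (merge A B (xa, y)) * indicator X (merge A B (xa, y)) \<partial>Pi\<^sub>M B M) \<partial>Pi\<^sub>M A M)"
    proof (rule nn_integral_cong)
      fix xa assume xa: "xa \<in> space (Pi\<^sub>M A M)"
      have "(\<integral>\<^sup>+ y. T (merge A B (xa, y)) * indicator X (merge A B (xa, y)) \<partial>Pi\<^sub>M B M)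
          = (\<integral>\<^sup>+ y. (QA xa * indicator XA xa) * (FK xa y * indicator XB y) \<partial>Pi\<^sub>M B M)"
      proof (rule nn_integral_cong)
        fix y assume y: "y \<in> space (Pi\<^sub>M B M)"
        have "indicator X (merge A B (xa, y)) = (indicator XB y * indicator XA xa :: ennreal)"
          using mA[OF xa y] unfolding Xeq B_def by (simp add: indicator_def)
        then show "T (merge A B (xa, y)) * indicator X (merge A B (xa, y)) = (QA xa * indicator XA xa) * (FK xa y * indicator XB y)"
          using factor[OF xa y] by (simp add: ac_simps)
      qed
      also have "\<dots> = (QA xa * indicator XA xa) * (\<integral>\<^sup>+ y. FK xa y * indicator XB y \<partial>Pi\<^sub>M B M)"
        by (rule nn_integral_cmult) (use FKm1[OF xa] XB in measurable)
      also have "\<dots> = QA xa * (emeasure (K xa) XB * indicator XA xa)"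
        using Kem[OF xa XB] by (simp add: ac_simps)
      finally show "QA xa * (emeasure (K xa) XB * indicator XA xa) = (\<integral>\<^sup>+ y. T (merge A B (xa, y)) * indicator X (merge A B (xa, y)) \<partial>Pi\<^sub>M B M)" by simp
    qed
    also have "\<dots> = (\<integral>\<^sup>+ x. T x * indicator X x \<partial>Pi\<^sub>M N M)"
    proof -
      have "(\<lambda>x. T x * indicator X x) \<in> borel_measurable (Pi\<^sub>M N M)" using Tm Xs by measurable
      from fold_AB[OF fin AN this, folded B_def] show ?thesis by simp
    qed
    also have "\<dots> = emeasure (density (Pi\<^sub>M N M) T) X"
      by (rule emeasure_density[symmetric, OF Tm Xs])
    finally show ?thesis .
  qed
  have PT: "P = density (Pi\<^sub>M N M) T"
  proof (rule measure_eqI_generator_eq[OF Int_stable_prod_algebra prod_algebra_sets_into_space eqX])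
    show "sets P = sigma_sets (\<Pi>\<^sub>E i\<in>N. space (M i)) (prod_algebra N M)" using sP(1) sets_PiM by simp
    show "sets (density (Pi\<^sub>M N M) T) = sigma_sets (\<Pi>\<^sub>E i\<in>N. space (M i)) (prod_algebra N M)" using sets_PiM by simp
    show "range (\<lambda>_. \<Pi>\<^sub>E i\<in>N. space (M i)) \<subseteq> prod_algebra N M"
      using prod_algebraI_finite[OF fin, of "\<lambda>i. space (M i)" M] by auto
    show "(\<Union>i::nat. \<Pi>\<^sub>E i\<in>N. space (M i)) = (\<Pi>\<^sub>E i\<in>N. space (M i))" by simp
    show "\<And>i::nat. emeasure P (\<Pi>\<^sub>E i\<in>N. space (M i)) \<noteq> \<infinity>"
      using prob by (simp add: prob_space.emeasure_le_1 finite_measure.emeasure_finite prob_space.finite_measure)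
  qed
  show ?thesis unfolding in_PG_def H_def[symmetric]
    using prob kfH PT unfolding T_def by blast
qed

end

lemma kernel_fun_transfer:
  assumes "\<And>I. I \<subseteq> N \<Longrightarrow> Pi\<^sub>M I M' = Pi\<^sub>M I M" "M' s = M s" "pa E s \<subseteq> N"
  shows "kernel_fun M' E s k = kernel_fun M E s k"
  unfolding kernel_fun_def using assms by simp

theorem lemma3:
  fixes N :: "'n set" and M :: "'n \<Rightarrow> 'x measure" and P :: "('n \<Rightarrow> 'x) measure"
  assumes "finite N"
    and "\<forall>s\<in>N. state_space (M s)"
    and "prob_space P"
    and "\<exists>p \<in> borel_measurable (Pi\<^sub>M N M). P = density (Pi\<^sub>M N M) p"
  shows
    "(\<forall>E ord A K. is_dag N E \<and> topo_order N E ord \<and> A \<subseteq> roots N E \<and>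
        in_KG M N E A K \<and> cond_version M N A P K
        \<longrightarrow> in_PG M N (E \<union> {(s, t). s \<in> A \<and> t \<in> A \<and> ord s < ord t}) P)
     \<and>
     (\<forall>E A. is_dag N E \<and> A \<subseteq> N \<and> (\<forall>s\<in>A. pa E s \<subseteq> A) \<and> in_PG M N E P
        \<longrightarrow> (\<exists>K. in_KG M N (E - {(s, t). (s, t) \<in> E \<and> s \<in> A \<and> t \<in> A}) A K
                  \<and> cond_version M N A P K))"
proof -
  define M' where "M' i = (if i \<in> N then M i else count_space {})" for i
  have sf: "sigma_finite_measure (M' i)" for i
    proof (cases "i \<in> N")
      case True
      have "state_space (M i)" using assms(2) True by blast
      then have "sigma_finite_measure (M i)" by (rule state_space_sf)
      then show ?thesis using True by (simp add: M'_def)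
    next
      case False
      have "finite_measure (count_space ({} :: 'x set))" by (rule finite_measure_count_space) simp
      then show ?thesis using False by (simp add: M'_def finite_measure.sigma_finite_measure)
    qed
  interpret product_sigma_finite M' by (rule product_sigma_finite.intro) (rule sf)
  have PiM_eq: "Pi\<^sub>M I M' = Pi\<^sub>M I M" if "I \<subseteq> N" for I
    by (rule PiM_cong) (use that in \<open>auto simp: M'_def\<close>)
  have M'_eq: "M' s = M s" if "s \<in> N" for s using that by (simp add: M'_def)
  obtain p where pm: "p \<in> borel_measurable (Pi\<^sub>M N M)" and Pd: "P = density (Pi\<^sub>M N M) p" using assms(4) by blast
  have pm': "p \<in> borel_measurable (Pi\<^sub>M N M')" and Pd': "P = density (Pi\<^sub>M N M') p"
    using pm Pd PiM_eq[of N] by simp_all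
  have kfT: "kernel_fun M' E s k = kernel_fun M E s k" if "E \<subseteq> N \<times> N" "s \<in> N" for E s k
    by (rule kernel_fun_transfer[of N M' M]) (use PiM_eq M'_eq that in \<open>auto simp: pa_def\<close>)
  have PGT: "in_PG M' N E P = in_PG M N E P" if "E \<subseteq> N \<times> N" for E
  proof -
    have kb: "(\<forall>s\<in>N. kernel_fun M' E s (k s)) = (\<forall>s\<in>N. kernel_fun M E s (k s))" for k
      using kfT[OF that] by blast
    show ?thesis unfolding in_PG_def kb PiM_eq[of N, OF subset_refl] ..
  qed
  have KGT: "in_KG M' N E A K = in_KG M N E A K" if "E \<subseteq> N \<times> N" "A \<subseteq> N" for E A K
  proof -
    have 1: "Pi\<^sub>M A M' = Pi\<^sub>M A M" "Pi\<^sub>M (N - A) M' = Pi\<^sub>M (N - A) M" using PiM_eq that(2) by auto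
    have kb: "(\<forall>s\<in>N - A. kernel_fun M' E s (k s)) = (\<forall>s\<in>N - A. kernel_fun M E s (k s))" for k
      using kfT[OF that(1)] by blast
    show ?thesis unfolding in_KG_def 1 kb ..
  qed
  have CVT: "cond_version M' N A P K = cond_version M N A P K" if "A \<subseteq> N" for A K
  proof -
    have 1: "Pi\<^sub>M A M' = Pi\<^sub>M A M" "Pi\<^sub>M (N - A) M' = Pi\<^sub>M (N - A) M" "Pi\<^sub>M N M' = Pi\<^sub>M N M"
      using PiM_eq that by auto
    show ?thesis unfolding cond_version_def 1 ..
  qed
  show ?thesis
  proof (intro conjI allI impI)
    fix E ord A K
    assume h: "is_dag N E \<and> topo_order N E ord \<and> A \<subseteq> roots N E \<and> in_KG M N E A K \<and> cond_version M N A P K"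
    have EN: "E \<subseteq> N \<times> N" using h unfolding is_dag_def by blast
    have AN: "A \<subseteq> N" using h unfolding roots_def by blast
    have HN: "E \<union> {(s, t). s \<in> A \<and> t \<in> A \<and> ord s < ord t} \<subseteq> N \<times> N" using EN AN by blast
    have "in_PG M' N (E \<union> {(s, t). s \<in> A \<and> t \<in> A \<and> ord s < ord t}) P"
      using part_a[OF assms(1) pm' Pd' assms(3), of E ord A K] h KGT[OF EN AN] CVT[OF AN] by blast
    then show "in_PG M N (E \<union> {(s, t). s \<in> A \<and> t \<in> A \<and> ord s < ord t}) P" using PGT[OF HN] by simp
  next
    fix E A
    assume h: "is_dag N E \<and> A \<subseteq> N \<and> (\<forall>s\<in>A. pa E s \<subseteq> A) \<and> in_PG M N E P"
    have EN: "E \<subseteq> N \<times> N" using h unfolding is_dag_def by blast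
    have AN: "A \<subseteq> N" using h by blast
    have HN: "E - {(s, t). (s, t) \<in> E \<and> s \<in> A \<and> t \<in> A} \<subseteq> N \<times> N" using EN by blast
    obtain K where "in_KG M' N (E - {(s, t). (s, t) \<in> E \<and> s \<in> A \<and> t \<in> A}) A K" "cond_version M' N A P K"
      using part_b[OF assms(1), of E A P] h PGT[OF EN] by blast
    then show "\<exists>K. in_KG M N (E - {(s, t). (s, t) \<in> E \<and> s \<in> A \<and> t \<in> A}) A K \<and> cond_version M N A P K"
      using KGT[OF HN AN] CVT[OF AN] by blast
  qed
qed

end
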